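(* Let $n\ge2$ and $k\ge1$ with $2k\le n$. Let $w_0w_1\dots w_{2k+1}$ be any Dyck word of length $2(k+1)$ over $\{u,d\}$. Define the sequence $s_1s_2\dots s_{2k}$ by: if $w_i$ is the $r$-th letter $d$ among $w_1,\dots,w_{2k}$, then $s_i$ is the $r$-th smallest element of $A_{2k}=\{1,2,4,\dots,2k-2\}$; if $w_i$ is the $r$-th letter $u$ among $w_1,\dots,w_{2k}$, then $s_i$ is the $r$-th smallest element of $[2k]\setminus A_{2k}=\{3,5,\dots,2k-1,2k\}$. Then $s_1s_2\dots s_{2k}$ is the sequence of the top $2k$ alternatives of some order belonging to part $k$ of $D_X(A_n)$.
   Context: A Dyck word of length $2m$ is a sequence $a_1\dots a_{2m}$ of $m$ letters $u$ and $m$ letters $d$ such that every prefix contains at least as many $u$'s as $d$'s (so $w_0=u$, $w_{2k+1}=d$, and $w_1\dots w_{2k}$ has $k$ letters of each kind). For $m\ge1$ let $A_m=\{1\}\cup\{\text{even } j: 2\le j\le m-1\}$. For $A\subseteq[n]$, $D_X(A)$ is the set of all linear orders $q$ on $[n]$ (written top to bottom) such that for every triple $i<j<l$: if $j\in A$ then $i$ is not ranked last among $\{i,j,l\}$ in $q$, and if $j\notin A$ then $l$ is not ranked first among $\{i,j,l\}$ in $q$. Part $k$ of $D_X(A_n)$ consists of the orders in $D_X(A_n)$ whose top $2k$ positions are occupied exactly by $[2k]$ but, when $k\ge2$, whose top $2(k-1)$ positions are not occupied exactly by $[2(k-1)]$. *)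

theory Defs
  imports Main
begin

(* Letters: True = u, False = d. *)
definition cnt :: "bool \<Rightarrow> bool list \<Rightarrow> nat" where
  "cnt b xs = length (filter (\<lambda>x. x = b) xs)"

definition dyck_word :: "nat \<Rightarrow> bool list \<Rightarrow> bool" where
  "dyck_word m w \<longleftrightarrow> length w = 2 * m \<and> cnt True w = m \<and> cnt False w = m \<and>
     (\<forall>p \<le> length w. cnt False (take p w) \<le> cnt True (take p w))"

definition A_set :: "nat \<Rightarrow> nat set" where
  "A_set m = {1} \<union> {j. even j \<and> 2 \<le> j \<and> j \<le> m - 1}"

(* position of x in q (0 = top) *)
definition pos :: "nat list \<Rightarrow> nat \<Rightarrow> nat" where
  "pos q x = (LEAST p. p < length q \<and> q ! p = x)"

(* A linear order on [n] is a list, top to bottom; position = index in the list. *)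
definition lin_order :: "nat \<Rightarrow> nat list \<Rightarrow> bool" where
  "lin_order n q \<longleftrightarrow> distinct q \<and> set q = {1..n}"

definition D_X :: "nat \<Rightarrow> nat set \<Rightarrow> nat list set" where
  "D_X n A = {q. lin_order n q \<and>
     (\<forall>i j l. 1 \<le> i \<and> i < j \<and> j < l \<and> l \<le> n \<longrightarrow>
        (j \<in> A \<longrightarrow> \<not> (pos q i > pos q j \<and> pos q i > pos q l)) \<and>
        (j \<notin> A \<longrightarrow> \<not> (pos q l < pos q i \<and> pos q l < pos q j)))}"

definition part :: "nat \<Rightarrow> nat \<Rightarrow> nat list set" where
  "part n k = {q \<in> D_X n (A_set n). set (take (2 * k) q) = {1..2 * k} \<and>
     (k \<ge> 2 \<longrightarrow> set (take (2 * (k - 1)) q) \<noteq> {1..2 * (k - 1)})}"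

definition rth :: "nat set \<Rightarrow> nat \<Rightarrow> nat" where
  "rth S r = sorted_list_of_set S ! (r - 1)"

definition seq_of :: "nat \<Rightarrow> bool list \<Rightarrow> nat list" where
  "seq_of k w = (let v = take (2 * k) (drop 1 w) in
     map (\<lambda>i. if v ! i then rth ({1..2 * k} - A_set (2 * k)) (cnt True (take (i + 1) v))
               else rth (A_set (2 * k)) (cnt False (take (i + 1) v))) [0..<2 * k])"

end

theory Submission
  imports Defs
begin


definition fa :: "nat \<Rightarrow> nat" where "fa r = (if r = 1 then 1 else 2 * (r - 1))"
definition fb :: "nat \<Rightarrow> nat \<Rightarrow> nat" where "fb k r = (if r < k then 2 * r + 1 else 2 * k)"

lemma A_list: assumes "k \<ge> 1" shows "A_set (2 * k) = set (map fa [1..<k+1])"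
proof
  show "A_set (2 * k) \<subseteq> set (map fa [1..<k+1])"
  proof
    fix x assume "x \<in> A_set (2*k)"
    then have "x = 1 \<or> (even x \<and> 2 \<le> x \<and> x \<le> 2*k - 1)" by (auto simp: A_set_def)
    then show "x \<in> set (map fa [1..<k+1])"
    proof
      assume "x = 1" then show ?thesis using assms by (force simp: fa_def)
    next
      assume h: "even x \<and> 2 \<le> x \<and> x \<le> 2*k - 1"
      then obtain y where y: "x = 2 * y" by blast
      have "x = fa (y + 1)" using h y by (simp add: fa_def)
      moreover have "y + 1 \<in> set [1..<k+1]" using h y by auto
      ultimately show ?thesis by auto
    qed
  qed
  show "set (map fa [1..<k+1]) \<subseteq> A_set (2 * k)"
    by (auto simp: fa_def A_set_def)
qed

lemma B_list: assumes "k \<ge> 1" shows "{1..2*k} - A_set (2 * k) = set (map (fb k) [1..<k+1])"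
proof
  show "{1..2*k} - A_set (2 * k) \<subseteq> set (map (fb k) [1..<k+1])"
  proof
    fix x assume x: "x \<in> {1..2*k} - A_set (2*k)"
    show "x \<in> set (map (fb k) [1..<k+1])"
    proof (cases "x = 2 * k")
      case True
      then have "x = fb k k" by (simp add: fb_def)
      then show ?thesis using assms by force
    next
      case False
      then have h0: "odd x" "x \<noteq> 1" "x \<ge> 1" "x < 2 * k" using x by (auto simp: A_set_def)
      then have h: "odd x" "x \<ge> 3" "x < 2 * k" by presburger+
      then obtain y where y: "x = 2 * y + 1" by (metis oddE)
      have "x = fb k y" using h y by (simp add: fb_def)
      moreover have "y \<in> set [1..<k+1]" using h y by auto
      ultimately show ?thesis by auto
    qed
  qed
  show "set (map (fb k) [1..<k+1]) \<subseteq> {1..2*k} - A_set (2 * k)"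
    by (auto simp: fb_def A_set_def)
qed

lemma sorted_fa: "sorted (map fa [1..<k+1])"
  by (auto simp: sorted_iff_nth_mono fa_def nth_upt simp del: upt_Suc)

lemma distinct_fa: "distinct (map fa [1..<k+1])"
  by (auto simp: distinct_map inj_on_def fa_def simp del: upt_Suc)

lemma sorted_fb: "sorted (map (fb k) [1..<k+1])"
  by (auto simp: sorted_iff_nth_mono fb_def nth_upt simp del: upt_Suc)

lemma distinct_fb: "distinct (map (fb k) [1..<k+1])"
  by (auto simp: distinct_map inj_on_def fb_def simp del: upt_Suc)

lemma rth_A: assumes "k \<ge> 1" "1 \<le> r" "r \<le> k" shows "rth (A_set (2*k)) r = fa r"
proof -
  have "sorted_list_of_set (A_set (2*k)) = map fa [1..<k+1]"
    using A_list[OF assms(1)] sorted_fa distinct_fa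
    by (metis sorted_list_of_set.idem_if_sorted_distinct)
  then show ?thesis using assms by (simp add: rth_def nth_upt del: upt_Suc)
qed

lemma rth_B: assumes "k \<ge> 1" "1 \<le> r" "r \<le> k" shows "rth ({1..2*k} - A_set (2*k)) r = fb k r"
proof -
  have "sorted_list_of_set ({1..2*k} - A_set (2*k)) = map (fb k) [1..<k+1]"
    using B_list[OF assms(1)] sorted_fb distinct_fb
    by (metis sorted_list_of_set.idem_if_sorted_distinct)
  then show ?thesis using assms by (simp add: rth_def nth_upt del: upt_Suc)
qed



lemma pos_eq: assumes "distinct q" "p < length q" shows "pos q (q!p) = p"
  unfolding pos_def
proof (rule Least_equality)
  show "p < length q \<and> q ! p = q ! p" using assms by simp
  fix y assume "y < length q \<and> q ! y = q ! p"
  then show "p \<le> y" using assms nth_eq_iff_index_eq by fastforce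
qed

lemma lemD:
  assumes ds: "distinct s" and ss: "set s = {1..m}" and mn: "m \<le> n"
    and cond: "\<And>p p'. p < m \<Longrightarrow> p' < m \<Longrightarrow> s!p < s!p' \<Longrightarrow> \<not>(s!p \<in> A_set m \<and> s!p' \<notin> A_set m) \<Longrightarrow> p < p'"
  shows "s @ [m+1..<n+1] \<in> D_X n (A_set n)"
proof -
  define q where "q = s @ [m+1..<n+1]"
  have ls: "length s = m" using ds ss distinct_card by fastforce
  have dq: "distinct q" using ds ss by (auto simp: q_def)
  have sq: "set q = {1..n}" using ss mn by (auto simp: q_def)
  have lq: "length q = n" using ls mn by (simp add: q_def)
  have ps: "pos q x < m \<and> s!(pos q x) = x" if "x \<in> {1..m}" for x
  proof -
    have "x \<in> set s" using that ss by simp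
    then obtain p where p: "p < m" "s!p = x" using ls by (auto simp: in_set_conv_nth)
    have "q!p = x" using p ls by (simp add: q_def nth_append)
    then have "pos q x = p" using pos_eq[OF dq, of p] p ls lq mn by simp
    then show ?thesis using p by simp
  qed
  have pr: "pos q x = x - 1" if "m < x" "x \<le> n" for x
  proof -
    have "\<not> x - 1 < length s" using that ls by simp
    then have "q!(x-1) = [m+1..<n+1] ! (x-1-m)" using ls unfolding q_def by (simp only: nth_append if_False)
    also have "\<dots> = x" using that by (simp del: upt_Suc)
    finally have "q!(x-1) = x" .
    then show ?thesis using pos_eq[OF dq, of "x-1"] that lq by simp
  qed
  have "\<forall>i j l. 1 \<le> i \<and> i < j \<and> j < l \<and> l \<le> n \<longrightarrow>
        (j \<in> A_set n \<longrightarrow> \<not> (pos q i > pos q j \<and> pos q i > pos q l)) \<and>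
        (j \<notin> A_set n \<longrightarrow> \<not> (pos q l < pos q i \<and> pos q l < pos q j))"
  proof (intro allI impI)
    fix i j l assume h: "1 \<le> i \<and> i < j \<and> j < l \<and> l \<le> n"
    show "(j \<in> A_set n \<longrightarrow> \<not> (pos q i > pos q j \<and> pos q i > pos q l)) \<and>
        (j \<notin> A_set n \<longrightarrow> \<not> (pos q l < pos q i \<and> pos q l < pos q j))"
    proof (cases "l \<le> m")
      case True
      have jA: "j \<in> A_set n \<longleftrightarrow> j \<in> A_set m" using h True mn by (auto simp: A_set_def)
      have pi: "pos q i < m \<and> s!(pos q i) = i" using ps h True by auto
      have pj: "pos q j < m \<and> s!(pos q j) = j" using ps h True by auto
      have pl: "pos q l < m \<and> s!(pos q l) = l" using ps h True by auto
      show ?thesis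
      proof (intro conjI impI)
        assume "j \<in> A_set n"
        then have "pos q i < pos q j" using cond[of "pos q i" "pos q j"] pi pj h jA by auto
        then show "\<not> (pos q i > pos q j \<and> pos q i > pos q l)" by simp
      next
        assume "j \<notin> A_set n"
        then have "pos q j < pos q l" using cond[of "pos q j" "pos q l"] pl pj h jA by auto
        then show "\<not> (pos q l < pos q i \<and> pos q l < pos q j)" by simp
      qed
    next
      case False
      have pl: "pos q l = l - 1" using pr h False by auto
      have "pos q i < pos q l"
      proof (cases "i \<le> m")
        case True then show ?thesis using ps[of i] h pl False by auto
      next
        case False then show ?thesis using pr[of i] h pl by auto
      qed
      then show ?thesis by auto
    qed
  qed
  then have "q \<in> D_X n (A_set n)" using dq sq unfolding D_X_def lin_order_def by simp
  then show ?thesis by (simp add: q_def)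
qed



lemma cnt_append: "cnt b (xs @ ys) = cnt b xs + cnt b ys"
  by (simp add: cnt_def)

lemma cnt_Cons: "cnt b (x # xs) = (if x = b then 1 else 0) + cnt b xs"
  by (simp add: cnt_def)

lemma cnt_TF: "cnt True xs + cnt False xs = length xs"
  by (induction xs) (auto simp: cnt_def)

lemma cnt_take_Suc: "p < length v \<Longrightarrow> cnt b (take (Suc p) v) = cnt b (take p v) + (if v!p = b then 1 else 0)"
  by (simp add: take_Suc_conv_app_nth cnt_append cnt_def)

lemma cnt_take_mono: "p \<le> p' \<Longrightarrow> cnt b (take p v) \<le> cnt b (take p' v)"
proof -
  assume "p \<le> p'"
  then have "take p' v = take p v @ drop p (take p' v)"
    by (metis append_take_drop_id min.absorb1 take_take)
  then show ?thesis by (metis cnt_append le_add1)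
qed

lemma fa_A: "1 \<le> r \<Longrightarrow> r \<le> k \<Longrightarrow> fa r \<in> A_set (2*k)"
  by (auto simp: fa_def A_set_def)
lemma fb_A: "1 \<le> r \<Longrightarrow> r \<le> k \<Longrightarrow> fb k r \<notin> A_set (2*k)"
  by (auto simp: fb_def A_set_def)
lemma fa_rng: "1 \<le> r \<Longrightarrow> r \<le> k \<Longrightarrow> 1 \<le> fa r \<and> fa r \<le> 2*k"
  by (auto simp: fa_def)
lemma fb_rng: "1 \<le> r \<Longrightarrow> r \<le> k \<Longrightarrow> 1 \<le> fb k r \<and> fb k r \<le> 2*k"
  by (auto simp: fb_def)
lemma fa_mono: "1 \<le> r \<Longrightarrow> r < t \<Longrightarrow> fa r < fa t"
  by (auto simp: fa_def)
lemma fb_mono: "1 \<le> r \<Longrightarrow> r < t \<Longrightarrow> t \<le> k \<Longrightarrow> fb k r < fb k t"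
  by (auto simp: fb_def)
lemma fb_fa: "1 \<le> r \<Longrightarrow> r \<le> k \<Longrightarrow> 1 \<le> t \<Longrightarrow> t \<le> k \<Longrightarrow> fb k r < fa t \<Longrightarrow> r + 2 \<le> t"
  by (auto simp: fb_def fa_def split: if_splits)
lemma fa_le: "2 \<le> k \<Longrightarrow> 1 \<le> t \<Longrightarrow> t \<le> k \<Longrightarrow> fa t \<le> 2*k - 2"
  by (auto simp: fa_def)

context
  fixes k :: nat and v :: "bool list"
  assumes k1: "k \<ge> 1" and lv: "length v = 2*k" and cTv: "cnt True v = k" and cFv: "cnt False v = k"
   and dy: "\<forall>p \<le> 2*k. cnt False (take p v) \<le> cnt True (take p v) + 1"
begin

definition ss :: "nat list" where
  "ss = map (\<lambda>i. if v!i then fb k (cnt True (take (Suc i) v)) else fa (cnt False (take (Suc i) v))) [0..<2*k]"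

lemma ss_len: "length ss = 2*k" by (simp add: ss_def)

lemma ss_nth: "p < 2*k \<Longrightarrow> ss!p = (if v!p then fb k (cnt True (take (Suc p) v)) else fa (cnt False (take (Suc p) v)))"
  by (simp add: ss_def)

lemma rng: assumes "p < 2*k" "v!p = b" shows "1 \<le> cnt b (take (Suc p) v) \<and> cnt b (take (Suc p) v) \<le> k"
proof -
  have "cnt b (take (Suc p) v) = cnt b (take p v) + 1" using cnt_take_Suc[of p v b] assms lv by simp
  moreover have "cnt b (take (Suc p) v) \<le> cnt b (take (2*k) v)" using cnt_take_mono assms by simp
  moreover have "cnt b (take (2*k) v) = k" using lv cTv cFv by (cases b) auto
  ultimately show ?thesis by simp
qed

lemma strict: assumes "p < p'" "p' < 2*k" "v!p' = b"
  shows "cnt b (take (Suc p) v) < cnt b (take (Suc p') v)"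
proof -
  have "cnt b (take (Suc p) v) \<le> cnt b (take p' v)" using cnt_take_mono assms by simp
  moreover have "cnt b (take (Suc p') v) = cnt b (take p' v) + 1" using cnt_take_Suc[of p' v b] assms lv by simp
  ultimately show ?thesis by simp
qed

lemma ss_less: assumes "p < p'" "p' < 2*k" "v!p = v!p'" shows "ss!p < ss!p'"
proof (cases "v!p")
  case True
  then show ?thesis using assms ss_nth strict[OF assms(1,2), of True] rng[of p True] rng[of p' True]
      fb_mono[of "cnt True (take (Suc p) v)" "cnt True (take (Suc p') v)" k] by auto
next
  case False
  then show ?thesis using assms ss_nth strict[OF assms(1,2), of False] rng[of p False] rng[of p' False]
      fa_mono[of "cnt False (take (Suc p) v)" "cnt False (take (Suc p') v)"] by auto
qed

lemma ss_A: assumes "p < 2*k" shows "ss!p \<in> A_set (2*k) \<longleftrightarrow> \<not> v!p"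
  using assms ss_nth[OF assms] rng[OF assms, of "v!p"] fa_A fb_A by (cases "v!p") auto

lemma ss_rng: assumes "p < 2*k" shows "1 \<le> ss!p \<and> ss!p \<le> 2*k"
  using assms ss_nth[OF assms] rng[OF assms, of "v!p"] fa_rng fb_rng by (cases "v!p") auto

lemma ss_neq: assumes "p < p'" "p' < 2*k" shows "ss!p \<noteq> ss!p'"
proof (cases "v!p = v!p'")
  case True then show ?thesis using ss_less assms by fastforce
next
  case False then show ?thesis using ss_A[of p] ss_A[of p'] assms by auto
qed

lemma ss_distinct: "distinct ss"
  unfolding distinct_conv_nth ss_len
  by (metis linorder_neqE_nat ss_neq)

lemma ss_set: "set ss = {1..2*k}"
proof (rule card_subset_eq)
  show "set ss \<subseteq> {1..2*k}" using ss_rng by (auto simp: in_set_conv_nth ss_len)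
  show "card (set ss) = card {1..2*k}" using distinct_card[OF ss_distinct] ss_len by simp
qed simp

lemma ss_cond: assumes "p < 2*k" "p' < 2*k" "ss!p < ss!p'" "\<not>(ss!p \<in> A_set (2*k) \<and> ss!p' \<notin> A_set (2*k))"
  shows "p < p'"
proof (rule ccontr)
  assume "\<not> p < p'"
  then have pp: "p' < p" using assms(3) by (cases "p = p'") auto
  show False
  proof (cases "v!p = v!p'")
    case True then show False using ss_less[OF pp assms(1)] assms(3) by simp
  next
    case False
    then have vp: "v!p" "\<not> v!p'" using assms(4) ss_A[OF assms(1)] ss_A[OF assms(2)] by auto
    define r where "r = cnt True (take (Suc p) v)"
    define t where "t = cnt False (take (Suc p') v)"
    have r: "1 \<le> r" "r \<le> k" using rng[OF assms(1), of True] vp r_def by auto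
    have t: "1 \<le> t" "t \<le> k" using rng[OF assms(2), of False] vp t_def by auto
    have "fb k r < fa t" using assms(3) ss_nth[OF assms(1)] ss_nth[OF assms(2)] vp r_def t_def by simp
    then have rt: "r + 2 \<le> t" using fb_fa r t by blast
    have "t \<le> cnt True (take (Suc p') v) + 1" using dy assms(2) t_def by simp
    moreover have "cnt True (take (Suc p') v) \<le> r" using cnt_take_mono pp r_def by simp
    ultimately show False using rt by simp
  qed
qed

lemma ss_part: assumes "k \<ge> 2" shows "set (take (2*k-2) ss) \<noteq> {1..2*k-2}"
proof
  assume eq: "set (take (2*k-2) ss) = {1..2*k-2}"
  have big: "v!p" if "2*k-2 \<le> p" "p < 2*k" for p
  proof (rule ccontr)
    assume nv: "\<not> v!p"
    have "ss!p \<notin> set (take (2*k-2) ss)"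
    proof
      assume "ss!p \<in> set (take (2*k-2) ss)"
      then obtain i where i: "i < 2*k-2" "take (2*k-2) ss ! i = ss!p" using ss_len by (auto simp: in_set_conv_nth)
      then have "ss!i = ss!p" by simp
      then show False using ss_distinct i that ss_len nth_eq_iff_index_eq by fastforce
    qed
    then have "ss!p > 2*k-2" using eq ss_rng[OF that(2)] by auto
    moreover have "ss!p \<le> 2*k-2" using ss_nth[OF that(2)] nv rng[OF that(2), of False] fa_le[OF assms] by auto
    ultimately show False by simp
  qed
  have v1: "v!(2*k-2)" "v!(2*k-1)" using big assms by auto
  have "cnt True (take (2*k) v) = k" using lv cTv by simp
  moreover have "take (2*k) v = take (2*k-2) v @ [v!(2*k-2), v!(2*k-1)]"
  proof -
    have e: "Suc (Suc (2*k-2)) = 2*k" using assms by simp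
    have "take (2*k) v = take (Suc (Suc (2*k-2))) v" by (simp only: e)
    also have "\<dots> = take (2*k-2) v @ [v!(2*k-2), v!(Suc (2*k-2))]"
    proof -
      have g: "\<And>j. Suc j < length v \<Longrightarrow> take (Suc (Suc j)) v = take j v @ [v!j, v!Suc j]"
        by (simp add: take_Suc_conv_app_nth)
      show ?thesis by (rule g) (use lv assms in simp)
    qed
    finally show ?thesis using assms by (simp add: numeral_2_eq_2 Suc_diff_Suc)
  qed
  ultimately have cT: "cnt True (take (2*k-2) v) = k - 2" using v1 by (simp add: cnt_append cnt_def)
  have "cnt False (take (2*k-2) v) = 2*k-2 - (k-2)" using cnt_TF[of "take (2*k-2) v"] cT lv by simp
  moreover have "cnt False (take (2*k-2) v) \<le> cnt True (take (2*k-2) v) + 1" using dy by simp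
  ultimately show False using cT assms by simp
qed

end



theorem lemma4:
  fixes n k :: nat and w :: "bool list"
  assumes "n \<ge> 2" and "k \<ge> 1" and "2 * k \<le> n"
    and "dyck_word (k + 1) w"
  shows "\<exists>q \<in> part n k. take (2 * k) q = seq_of k w"
proof -
  note k1 = assms(2)
  have lw: "length w = 2*k+2" and cTw: "cnt True w = k+1" and cFw: "cnt False w = k+1"
    and pre: "\<And>p. p \<le> length w \<Longrightarrow> cnt False (take p w) \<le> cnt True (take p w)"
    using assms(4) by (auto simp: dyck_word_def)
  define v where "v = take (2*k) (drop 1 w)"
  define z where "z = w!(2*k+1)"
  have lv: "length v = 2*k" using lw by (simp add: v_def)
  have d1: "drop 1 w = v @ [z]"
  proof -
    have "drop 1 w = take (2*k) (drop 1 w) @ drop (2*k) (drop 1 w)" by (rule append_take_drop_id[symmetric])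
    moreover have "drop (2*k) (drop 1 w) = [z]"
    proof -
      have "drop (2*k) (drop 1 w) = drop (2*k+1) w" by (simp add: add.commute)
      also have "\<dots> = w!(2*k+1) # drop (Suc (2*k+1)) w" by (rule Cons_nth_drop_Suc[symmetric]) (use lw in simp)
      also have "drop (Suc (2*k+1)) w = []" using lw by simp
      finally show ?thesis by (simp add: z_def)
    qed
    ultimately show ?thesis by (simp add: v_def)
  qed
  have w0: "w = w!0 # v @ [z]"
  proof -
    have "w = w!0 # drop (Suc 0) w" using lw by (simp add: Cons_nth_drop_Suc)
    then show ?thesis using d1 by simp
  qed
  have w0T: "w!0 = True"
  proof -
    have "take 1 w = [w!0]" by (subst w0) simp
    then show ?thesis using pre[of 1] lw by (simp add: cnt_def split: if_splits)
  qed
  have sumv: "cnt True v + cnt False v = 2*k" using cnt_TF lv by simp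
  have cw: "cnt True w = 1 + cnt True v + (if z then 1 else 0)" "cnt False w = cnt False v + (if z then 0 else 1)"
  proof -
    have "w = True # v @ [z]" using w0 w0T by simp
    then show "cnt True w = 1 + cnt True v + (if z then 1 else 0)" "cnt False w = cnt False v + (if z then 0 else 1)"
      by (simp_all add: cnt_Cons cnt_append cnt_def)
  qed
  have zF: "z = False"
  proof (rule ccontr)
    assume "z \<noteq> False"
    then have zt: z by simp
    have "take (2*k+1) w = True # v" proof -
      have "w = True # v @ [z]" using w0 w0T by simp
      then show ?thesis using lv by simp
    qed
    then have "cnt False (True # v) \<le> cnt True (True # v)" using pre[of "2*k+1"] lw by simp
    then show False using cw zt cTw cFw sumv by (simp add: cnt_Cons)
  qed
  have cTv: "cnt True v = k" and cFv: "cnt False v = k" using cw zF cTw cFw sumv by auto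
  have dy: "\<forall>p \<le> 2*k. cnt False (take p v) \<le> cnt True (take p v) + 1"
  proof (intro allI impI)
    fix p assume p: "p \<le> 2*k"
    have "take (Suc p) w = True # take p v" proof -
      have "w = True # v @ [z]" using w0 w0T by simp
      then show ?thesis using lv p by simp
    qed
    then show "cnt False (take p v) \<le> cnt True (take p v) + 1" using pre[of "Suc p"] lw p by (simp add: cnt_Cons)
  qed
  define s where "s = ss k v"
  have sl: "length s = 2*k" using ss_len[OF k1 lv cTv cFv dy] s_def by simp
  have sd: "distinct s" using ss_distinct[OF k1 lv cTv cFv dy] s_def by simp
  have sset: "set s = {1..2*k}" using ss_set[OF k1 lv cTv cFv dy] s_def by simp
  have seq: "seq_of k w = s"
  proof (rule nth_equalityI)
    show "length (seq_of k w) = length s" using sl by (simp add: seq_of_def Let_def)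
    fix i assume "i < length (seq_of k w)"
    then have i: "i < 2*k" by (simp add: seq_of_def Let_def)
    have r: "1 \<le> cnt b (take (Suc i) v) \<and> cnt b (take (Suc i) v) \<le> k" if "v!i = b" for b
      using rng[OF k1 lv cTv cFv dy i that] .
    show "seq_of k w ! i = s ! i"
      using ss_nth[OF k1 lv cTv cFv dy i] i r[of "v!i"] rth_A[OF k1] rth_B[OF k1]
      unfolding seq_of_def Let_def v_def[symmetric] s_def by (cases "v!i") auto
  qed
  define q where "q = s @ [2*k+1..<n+1]"
  have "q \<in> D_X n (A_set n)"
    unfolding q_def
  proof (rule lemD[OF sd sset assms(3)])
    fix p p' assume "p < 2*k" "p' < 2*k" "s!p < s!p'" "\<not>(s!p \<in> A_set (2*k) \<and> s!p' \<notin> A_set (2*k))"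
    then show "p < p'" using ss_cond[OF k1 lv cTv cFv dy] s_def by blast
  qed
  moreover have tq: "take (2*k) q = s" using sl by (simp add: q_def)
  moreover have "set (take (2*k) q) = {1..2*k}" using tq sset by simp
  moreover have "k \<ge> 2 \<longrightarrow> set (take (2 * (k - 1)) q) \<noteq> {1..2 * (k - 1)}"
  proof
    assume k2: "k \<ge> 2"
    have "take (2 * (k - 1)) q = take (2*k-2) s" using sl k2 by (simp add: q_def right_diff_distrib')
    then show "set (take (2 * (k - 1)) q) \<noteq> {1..2 * (k - 1)}"
      using ss_part[OF k1 lv cTv cFv dy k2] s_def by (simp add: right_diff_distrib')
  qed
  ultimately have "q \<in> part n k" unfolding part_def by simp
  then show ?thesis using seq tq by blast
qed

end
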